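(* Let $B\subset\mathbb R^8$ be a bounded domain and let $(B^h)_{h>0}$, $B^h\subset\mathbb Z^8_h$, converge to $B$. Let $f\in C^1(B,\mathbb O)$ and suppose there are functions $f^h:B^h\to\mathbb O$ with $D^hf^h(x)=0$ for every $x\in(B^h)^\circ$ and $$\lim_{h\to0^+}\ \max_{x\in B^h\cap B}|f(x)-f^h(x)|=0.$$ Then $Df=0$ on $B$.
   Context: $\mathbb O$ is the real octonion algebra with basis $\mathbf e_0=1,\dots,\mathbf e_7$, identified with $\mathbb R^8$; $|\cdot|$ is the Euclidean norm. $Df=\sum_{l=0}^7\mathbf e_l\,\partial f/\partial x_l$. For $h>0$, $\mathbb Z^8_h=(h\mathbb Z)^8$, $e_0,\dots,e_7$ are the standard unit vectors, $D^hf(x)=\sum_{l=0}^7\mathbf e_l\frac{f(x+he_l)-f(x-he_l)}{2h}$. For $A\subset\mathbb Z^8_h$: $N(x)=\{x,x\pm he_0,\dots,x\pm he_7\}$, $\partial A=\{x\in\mathbb Z^8_h:\ N(x)\cap A\neq\emptyset,\ N(x)\cap(\mathbb Z^8_h\setminus A)\neq\emptyset\}$, $A^\circ=A\setminus\partial A$. A family $(B^h)_{h>0}$ with $B^h\subset\mathbb Z^8_h$ converges to a bounded domain $B\subset\mathbb R^8$ if, as $h\to0^+$, $\max_{\alpha\in\partial B}\min_{\beta\in\partial B^h}\|\alpha-\beta\|\to0$, $\max_{\alpha\in\partial B^h}\min_{\beta\in\partial B}\|\alpha-\beta\|\to0$, $\max_{\alpha\in\overline B}\min_{\beta\in B^h}\|\alpha-\beta\|\to0$,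 and $\max_{\alpha\in B^h}\min_{\beta\in\overline B}\|\alpha-\beta\|\to0$ (topological $\partial B,\overline B$ in $\mathbb R^8$; discrete $\partial B^h$). *)

theory Defs
  imports "HOL-Analysis.Analysis"
begin

text \<open>Octonions are modelled as real^8 (components indexed by the numeral type 8,
  i.e. 0..7). The basis vector e_l is oe l.\<close>

type_synonym oct = "real^8"

definition oe :: "nat \<Rightarrow> real^8" where
  "oe l = axis (of_nat l :: 8) 1"

text \<open>Fano-plane convention: e_i e_(i+1) = e_(i+3) (indices mod 7 in 1..7).\<close>
definition fano :: "(nat \<times> nat \<times> nat) set" where
  "fano = {(1,2,4),(2,3,5),(3,4,6),(4,5,7),(5,6,1),(6,7,2),(7,1,3)}"

definition fano_cyc :: "(nat \<times> nat \<times> nat) set" where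
  "fano_cyc = fano \<union> {(b,c,a) | a b c. (a,b,c) \<in> fano} \<union> {(c,a,b) | a b c. (a,b,c) \<in> fano}"

definition emul :: "nat \<Rightarrow> nat \<Rightarrow> real^8" where
  "emul i j =
     (if i = 0 then oe j
      else if j = 0 then oe i
      else if i = j then - oe 0
      else (\<Sum>k\<in>{1..7}. (if (i,j,k) \<in> fano_cyc then 1
                         else if (j,i,k) \<in> fano_cyc then -1 else 0) *\<^sub>R oe k))"

definition omult :: "real^8 \<Rightarrow> real^8 \<Rightarrow> real^8" where
  "omult x y = (\<Sum>i<8. \<Sum>j<8. (x $ (of_nat i) * y $ (of_nat j)) *\<^sub>R emul i j)"

definition octD :: "(real^8 \<Rightarrow> real^8) \<Rightarrow> real^8 \<Rightarrow> real^8" where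
  "octD f x = (\<Sum>l<8. omult (oe l) (frechet_derivative f (at x) (oe l)))"

definition lattice :: "real \<Rightarrow> (real^8) set" where
  "lattice h = {x. \<forall>i. \<exists>k::int. x $ i = h * of_int k}"

definition octDh :: "real \<Rightarrow> (real^8 \<Rightarrow> real^8) \<Rightarrow> real^8 \<Rightarrow> real^8" where
  "octDh h f x = (\<Sum>l<8. omult (oe l) ((1 / (2 * h)) *\<^sub>R (f (x + h *\<^sub>R oe l) - f (x - h *\<^sub>R oe l))))"

definition nbhd :: "real \<Rightarrow> real^8 \<Rightarrow> (real^8) set" where
  "nbhd h x = {x} \<union> (\<Union>l<8. {x + h *\<^sub>R oe l, x - h *\<^sub>R oe l})"

definition dbound :: "real \<Rightarrow> (real^8) set \<Rightarrow> (real^8) set" where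
  "dbound h A = {x \<in> lattice h. nbhd h x \<inter> A \<noteq> {} \<and> nbhd h x \<inter> (lattice h - A) \<noteq> {}}"

definition dinterior :: "real \<Rightarrow> (real^8) set \<Rightarrow> (real^8) set" where
  "dinterior h A = A - dbound h A"

definition maxmin_to0 :: "(real \<Rightarrow> (real^8) set) \<Rightarrow> (real \<Rightarrow> (real^8) set) \<Rightarrow> bool" where
  "maxmin_to0 S T \<longleftrightarrow>
     (\<forall>\<epsilon>>0. \<forall>\<^sub>F h in at_right 0. \<forall>a\<in>S h. \<exists>b\<in>T h. dist a b < \<epsilon>)"

definition disc_converges :: "(real \<Rightarrow> (real^8) set) \<Rightarrow> (real^8) set \<Rightarrow> bool" where
  "disc_converges Bh B \<longleftrightarrow>
     maxmin_to0 (\<lambda>h. frontier B) (\<lambda>h. dbound h (Bh h)) \<and>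
     maxmin_to0 (\<lambda>h. dbound h (Bh h)) (\<lambda>h. frontier B) \<and>
     maxmin_to0 (\<lambda>h. closure B) Bh \<and>
     maxmin_to0 Bh (\<lambda>h. closure B)"

end

theory Submission
  imports Defs
begin


lemma ex8: "\<exists>l<8. (i::8) = of_nat l"
  apply (induct i rule: bit0_induct)
  subgoal for z by (intro exI[of _ "nat z"]) (auto simp: of_nat_nat)
  done

definition P :: "real^8 \<Rightarrow> real \<Rightarrow> (8 \<Rightarrow> int) \<Rightarrow> real^8" where
  "P b h k = b + h *\<^sub>R (\<chi> j. of_int (k j))"

definition cube :: "nat \<Rightarrow> (8 \<Rightarrow> int) set" where
  "cube n = PiE UNIV (\<lambda>_. {- int n..int n})"

lemma P_shift: "P b h (k(i := k i + s)) = P b h k + (h * of_int s) *\<^sub>R axis i 1"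
  by (auto simp: P_def vec_eq_iff axis_def algebra_simps)

lemma oe_axis: "oe l = axis (of_nat l) 1" by (simp add: oe_def)

lemma P_plus: "P b h k + h *\<^sub>R oe l = P b h (k(of_nat l := k (of_nat l) + 1))"
  by (simp add: P_shift oe_def)

lemma P_minus: "P b h k - h *\<^sub>R oe l = P b h (k(of_nat l := k (of_nat l) - 1))"
  using P_shift[of b h k "of_nat l" "-1"] by (simp add: oe_def)

lemma P_lattice: "b \<in> lattice h \<Longrightarrow> P b h k \<in> lattice h"
proof -
  assume "b \<in> lattice h"
  then have "\<forall>i. \<exists>m::int. b $ i = h * of_int m" by (simp add: lattice_def)
  then show ?thesis unfolding lattice_def P_def
    by (auto simp: algebra_simps) (metis distrib_left of_int_add)
qed

lemma finite_cube[simp]: "finite (cube n)"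
  by (simp add: cube_def finite_PiE)

lemma card_cube: "card (cube n) = (2*n+1)^8"
proof -
  have "card (cube n) = (\<Prod>j\<in>(UNIV::8 set). card {- int n..int n})"
    by (simp add: cube_def card_PiE)
  also have "card {- int n..int n} = 2*n+1" by (simp add: nat_add_distrib nat_mult_distrib)
  finally show ?thesis by simp
qed

lemma prod_if8: "(\<Prod>j\<in>(UNIV::8 set). (if j = i then a else c)) = a * (c::nat)^7"
proof -
  have "(\<Prod>j\<in>(UNIV::8 set). (if j = i then a else c)) = a * (\<Prod>j\<in>UNIV - {i}. (if j = i then a else c))"
    using prod.remove[of UNIV i "\<lambda>j. if j = i then a else c"] by simp
  also have "(\<Prod>j\<in>UNIV - {i}. (if j = i then a else c)) = (\<Prod>j\<in>UNIV - {i}. c)"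
    by (rule prod.cong) auto
  also have "\<dots> = c ^ card (UNIV - {i::8})" by simp
  also have "card (UNIV - {i::8}) = 7" by (simp add: card_Diff_singleton)
  finally show ?thesis .
qed

lemma P_norm: "norm (P b h k - b) \<le> \<bar>h\<bar> * (\<Sum>j\<in>UNIV. \<bar>of_int (k j)\<bar>)"
proof -
  have "norm (P b h k - b) = \<bar>h\<bar> * norm (\<chi> j. (of_int (k j)::real))" by (simp add: P_def)
  also have "\<dots> \<le> \<bar>h\<bar> * (\<Sum>j\<in>UNIV. \<bar>(\<chi> j. (of_int (k j)::real)) $ j\<bar>)"
    by (intro mult_left_mono norm_le_l1_cart) auto
  finally show ?thesis by simp
qed

lemma P_norm_cube: "k \<in> cube m \<Longrightarrow> norm (P b h k - b) \<le> \<bar>h\<bar> * (8 * real m)"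
proof -
  assume k: "k \<in> cube m"
  have "(\<Sum>j\<in>(UNIV::8 set). \<bar>(of_int (k j)::real)\<bar>) \<le> (\<Sum>j\<in>(UNIV::8 set). real m)"
  proof (intro sum_mono)
    fix j have "\<bar>k j\<bar> \<le> int m" using k by (auto simp: cube_def PiE_iff abs_le_iff) (meson minus_le_iff)
    then show "\<bar>(of_int (k j)::real)\<bar> \<le> real m" by (metis of_int_abs of_int_le_iff of_int_of_nat_eq)
  qed
  also have "\<dots> = 8 * real m" by simp
  finally show ?thesis using P_norm[of b h k] by (meson abs_ge_zero mult_left_mono order_trans)
qed



lemma sum_diff_bound:
  fixes G :: "'a \<Rightarrow> 'b::real_normed_vector"
  assumes "finite A" "finite C" "\<And>k. k \<in> A \<union> C \<Longrightarrow> norm (G k) \<le> e"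
  shows "norm (sum G A - sum G C) \<le> e * card (A - C) + e * card (C - A)"
proof -
  have "sum G A = sum G (A \<inter> C) + sum G (A - C)" using assms by (simp add: sum.Int_Diff)
  moreover have "sum G C = sum G (A \<inter> C) + sum G (C - A)"
    using sum.Int_Diff[of C G A] assms by (simp add: Int_commute)
  ultimately have eq: "sum G A - sum G C = sum G (A - C) - sum G (C - A)" by simp
  have 1: "norm (sum G (A - C)) \<le> e * card (A - C)"
    using sum_norm_le[of "A - C" G "\<lambda>_. e"] assms by (auto simp: mult.commute)
  have 2: "norm (sum G (C - A)) \<le> e * card (C - A)"
    using sum_norm_le[of "C - A" G "\<lambda>_. e"] assms by (auto simp: mult.commute)
  show ?thesis unfolding eq using norm_triangle_ineq4[of "sum G (A - C)" "sum G (C - A)"] 1 2 by linarith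
qed

lemma card_slab:
  fixes i :: 8
  shows "card (PiE UNIV (\<lambda>j. if j = i then {a, a+1} else {- int n..int n})) = 2 * (2*n+1)^7"
proof -
  have "card (PiE UNIV (\<lambda>j. if j = i then {a, a+1} else {- int n..int n}))
      = (\<Prod>j\<in>(UNIV::8 set). (if j = i then 2 else 2*n+1))"
    by (simp add: card_PiE nat_add_distrib nat_mult_distrib if_distrib numeral_2_eq_2 cong: if_cong)
  also have "\<dots> = 2 * (2*n+1)^7" by (rule prod_if8)
  finally show ?thesis .
qed

lemma slab_diff:
  assumes "k \<in> PiE UNIV (\<lambda>j. if j = i then S else U)" "k \<notin> PiE UNIV (\<lambda>j. if j = i then T else U)"
  shows "k i \<in> S - T" "\<forall>j. j \<noteq> i \<longrightarrow> k j \<in> U"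
  using assms by (auto simp: PiE_iff split: if_splits)

lemma PiE_slab: "k i \<in> S \<Longrightarrow> \<forall>j. j \<noteq> i \<longrightarrow> k j \<in> U \<Longrightarrow> k \<in> PiE UNIV (\<lambda>j. if j = i then S else U)"
  by (auto simp: PiE_iff)

lemma telescope:
  fixes G :: "(8 \<Rightarrow> int) \<Rightarrow> real^8" and i :: 8
  assumes bnd: "\<And>k. k \<in> cube (Suc n) \<Longrightarrow> norm (G k) \<le> e"
  shows "norm ((\<Sum>k\<in>cube n. G (k(i := k i + 1))) - (\<Sum>k\<in>cube n. G (k(i := k i - 1))))
           \<le> 4 * (2*n+1)^7 * e"
proof -
  define A where "A = PiE UNIV (\<lambda>j. if j = i then {- int n + 1..int n + 1} else {- int n..int n})"
  define C where "C = PiE UNIV (\<lambda>j. if j = i then {- int n - 1..int n - 1} else {- int n..int n})"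
  have fA: "finite A" unfolding A_def by (simp add: finite_PiE)
  have fC: "finite C" unfolding C_def by (simp add: finite_PiE)
  have sA: "(\<Sum>k\<in>cube n. G (k(i := k i + 1))) = sum G A"
    by (rule sum.reindex_bij_witness[where i="\<lambda>k. k(i := k i - 1)" and j="\<lambda>k. k(i := k i + 1)"])
       (auto simp: A_def cube_def PiE_iff split: if_splits)
  have sC: "(\<Sum>k\<in>cube n. G (k(i := k i - 1))) = sum G C"
    apply (rule sum.reindex_bij_witness[where i="\<lambda>k. k(i := k i + 1)" and j="\<lambda>k. k(i := k i - 1)"])
    apply (auto simp: C_def cube_def PiE_iff split: if_splits)
    apply (drule spec[of _ i], linarith)+
    done
  have e0: "0 \<le> e" proof -
    have "(\<lambda>_. 0) \<in> cube (Suc n)" by (simp add: cube_def PiE_iff)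
    from bnd[OF this] show ?thesis by (meson norm_ge_zero order_trans)
  qed
  have "norm (sum G A - sum G C) \<le> e * card (A - C) + e * card (C - A)"
  proof (rule sum_diff_bound[OF fA fC])
    fix k assume "k \<in> A \<union> C"
    have "\<forall>j. - int (Suc n) \<le> k j \<and> k j \<le> int (Suc n)"
    proof
      fix j show "- int (Suc n) \<le> k j \<and> k j \<le> int (Suc n)"
        using \<open>k \<in> A \<union> C\<close> by (auto simp: A_def C_def PiE_iff split: if_splits dest!: spec[of _ j])
    qed
    then have "k \<in> cube (Suc n)" by (auto simp: cube_def PiE_iff)
    then show "norm (G k) \<le> e" by (rule bnd)
  qed
  moreover have "card (A - C) \<le> 2 * (2*n+1)^7"
  proof -
    have "A - C \<subseteq> PiE UNIV (\<lambda>j. if j = i then {int n, int n+1} else {- int n..int n})"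
    proof
      fix k assume "k \<in> A - C"
      then have "k i \<in> {- int n + 1..int n + 1} - {- int n - 1..int n - 1}" "\<forall>j. j \<noteq> i \<longrightarrow> k j \<in> {- int n..int n}"
        using slab_diff[of k i] unfolding A_def C_def by blast+
      then show "k \<in> PiE UNIV (\<lambda>j. if j = i then {int n, int n+1} else {- int n..int n})"
        by (intro PiE_slab) auto
    qed
    then have "card (A - C) \<le> card (PiE UNIV (\<lambda>j. if j = i then {int n, int n+1} else {- int n..int n}))"
      by (intro card_mono) (auto simp: finite_PiE)
    then show ?thesis using card_slab[of i "int n" n] by simp
  qed
  moreover have "card (C - A) \<le> 2 * (2*n+1)^7"
  proof -
    have "C - A \<subseteq> PiE UNIV (\<lambda>j. if j = i then {- int n - 1, - int n - 1 + 1} else {- int n..int n})"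
    proof
      fix k assume "k \<in> C - A"
      then have "k i \<in> {- int n - 1..int n - 1} - {- int n + 1..int n + 1}" "\<forall>j. j \<noteq> i \<longrightarrow> k j \<in> {- int n..int n}"
        using slab_diff[of k i] unfolding A_def C_def by blast+
      then show "k \<in> PiE UNIV (\<lambda>j. if j = i then {- int n - 1, - int n - 1 + 1} else {- int n..int n})"
        by (intro PiE_slab) auto
    qed
    then have "card (C - A) \<le> card (PiE UNIV (\<lambda>j. if j = i then {- int n - 1, - int n - 1 + 1} else {- int n..int n}))"
      by (intro card_mono) (auto simp: finite_PiE)
    then show ?thesis using card_slab[of i "- int n - 1" n] by simp
  qed
  ultimately have "norm (sum G A - sum G C) \<le> e * (2 * (2*n+1)^7) + e * (2 * (2*n+1)^7)"
    using e0 by (smt (verit) mult_left_mono of_nat_le_iff of_nat_mult of_nat_numeral of_nat_power)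
  then show ?thesis unfolding sA sC by (simp add: algebra_simps)
qed



lemma linear_omult: "linear (omult x)"
proof (rule linearI)
  fix a b :: "real^8" and c :: real
  show "omult x (a + b) = omult x a + omult x b"
    by (simp add: omult_def distrib_left scaleR_add_left sum.distrib)
  show "omult x (c *\<^sub>R a) = c *\<^sub>R omult x a"
    by (simp add: omult_def scaleR_sum_right algebra_simps)
qed

lemma omult_bound: "\<exists>K>0. \<forall>l<8. \<forall>y. norm (omult (oe l) y) \<le> K * norm y"
proof -
  have "\<forall>l. \<exists>B>0. \<forall>y. norm (omult (oe l) y) \<le> B * norm y"
    using linear_bounded_pos[OF linear_omult] by metis
  then obtain Bf where Bf: "\<And>l. Bf l > 0" "\<And>l y. norm (omult (oe l) y) \<le> Bf l * norm y" by metis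
  define K where "K = (\<Sum>l<8::nat. Bf l)"
  have "K > 0" unfolding K_def using Bf(1) by (intro sum_pos) (auto simp: lessThan_empty_iff)
  moreover have "\<forall>l<8. \<forall>y. norm (omult (oe l) y) \<le> K * norm y"
  proof (intro allI impI)
    fix l y assume "l < (8::nat)"
    then have "Bf l \<le> K" unfolding K_def using Bf(1) by (intro member_le_sum) (auto intro: less_imp_le)
    then show "norm (omult (oe l) y) \<le> K * norm y"
      using Bf(2)[of l y] by (meson mult_right_mono norm_ge_zero order_trans)
  qed
  ultimately show ?thesis by blast
qed

lemma octDh_diff: "octDh h (\<lambda>y. F y - G y) x = octDh h F x - octDh h G x"
proof -
  have "\<And>l. omult (oe l) ((1 / (2 * h)) *\<^sub>R (F (x + h *\<^sub>R oe l) - G (x + h *\<^sub>R oe l) - (F (x - h *\<^sub>R oe l) - G (x - h *\<^sub>R oe l))))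
     = omult (oe l) ((1 / (2 * h)) *\<^sub>R (F (x + h *\<^sub>R oe l) - F (x - h *\<^sub>R oe l)))
     - omult (oe l) ((1 / (2 * h)) *\<^sub>R (G (x + h *\<^sub>R oe l) - G (x - h *\<^sub>R oe l)))"
    by (simp add: linear_diff[OF linear_omult, symmetric] algebra_simps)
  then show ?thesis unfolding octDh_def by (simp add: sum_subtractf)
qed

lemma octDh_sum:
  assumes "finite S"
  shows "(\<Sum>k\<in>S. octDh h g (Q k)) = (\<Sum>l<8. omult (oe l) ((1 / (2 * h)) *\<^sub>R
      ((\<Sum>k\<in>S. g (Q k + h *\<^sub>R oe l)) - (\<Sum>k\<in>S. g (Q k - h *\<^sub>R oe l)))))"
proof -
  have "(\<Sum>k\<in>S. octDh h g (Q k)) = (\<Sum>l<8. \<Sum>k\<in>S. omult (oe l) ((1 / (2 * h)) *\<^sub>R (g (Q k + h *\<^sub>R oe l) - g (Q k - h *\<^sub>R oe l))))"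
    unfolding octDh_def by (rule sum.swap)
  also have "\<dots> = (\<Sum>l<8. omult (oe l) (\<Sum>k\<in>S. (1 / (2 * h)) *\<^sub>R (g (Q k + h *\<^sub>R oe l) - g (Q k - h *\<^sub>R oe l))))"
    by (simp add: linear_sum[OF linear_omult])
  also have "\<dots> = (\<Sum>l<8. omult (oe l) ((1 / (2 * h)) *\<^sub>R
      ((\<Sum>k\<in>S. g (Q k + h *\<^sub>R oe l)) - (\<Sum>k\<in>S. g (Q k - h *\<^sub>R oe l)))))"
    by (simp add: scaleR_diff_right scaleR_sum_right sum_subtractf)
  finally show ?thesis .
qed



lemma two_h: fixes x e :: "'a::real_vector" shows "x + h *\<^sub>R e - (x - h *\<^sub>R e) = (2*h) *\<^sub>R e"
proof -
  have "x + h *\<^sub>R e - (x - h *\<^sub>R e) = h *\<^sub>R e + h *\<^sub>R e" by (simp add: algebra_simps)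
  also have "\<dots> = (h + h) *\<^sub>R e" by (rule scaleR_add_left[symmetric])
  also have "h + h = 2 * h" by simp
  finally show ?thesis .
qed

lemma mv_bound:
  fixes f :: "real^8 \<Rightarrow> real^8" and f' :: "real^8 \<Rightarrow> ((real^8) \<Rightarrow>\<^sub>L (real^8))"
  assumes der: "\<And>y. y \<in> ball x0 r \<Longrightarrow> (f has_derivative blinfun_apply (f' y)) (at y)"
    and cont: "\<And>y. y \<in> ball x0 r \<Longrightarrow> norm (f' y - f' x0) \<le> \<eta>"
    and p: "x + h *\<^sub>R e \<in> ball x0 r" and m: "x - h *\<^sub>R e \<in> ball x0 r"
    and h: "h > 0" and e: "norm e = 1"
  shows "norm ((1 / (2 * h)) *\<^sub>R (f (x + h *\<^sub>R e) - f (x - h *\<^sub>R e)) - f' x0 e) \<le> \<eta>"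
proof -
  have x0: "x0 \<in> ball x0 r" using p by (auto simp: dist_norm) (metis dist_norm dist_self mem_ball norm_ge_zero order_le_less_trans)
  have "norm (f (x + h *\<^sub>R e) - f (x - h *\<^sub>R e) - blinfun_apply (f' x0) ((x + h *\<^sub>R e) - (x - h *\<^sub>R e)))
      \<le> norm ((x + h *\<^sub>R e) - (x - h *\<^sub>R e)) * \<eta>"
  proof (rule differentiable_bound_linearization[where S="ball x0 r" and f'="\<lambda>y. blinfun_apply (f' y)" and a="x - h *\<^sub>R e" and b="x + h *\<^sub>R e"])
    fix t :: real assume "t \<in> {0..1}"
    then have "(1 - t) *\<^sub>R (x - h *\<^sub>R e) + t *\<^sub>R (x + h *\<^sub>R e) \<in> ball x0 r"
      using convex_ball[of x0 r, unfolded convex_alt] p m by auto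
    moreover have "(1 - t) *\<^sub>R (x - h *\<^sub>R e) + t *\<^sub>R (x + h *\<^sub>R e) = (x - h *\<^sub>R e) + t *\<^sub>R ((x + h *\<^sub>R e) - (x - h *\<^sub>R e))"
      by (simp add: algebra_simps)
    ultimately show "(x - h *\<^sub>R e) + t *\<^sub>R ((x + h *\<^sub>R e) - (x - h *\<^sub>R e)) \<in> ball x0 r" by simp
  next
    fix y assume "y \<in> ball x0 r"
    then show "(f has_derivative blinfun_apply (f' y)) (at y within ball x0 r)"
      using der has_derivative_at_withinI by blast
  next
    fix y assume "y \<in> ball x0 r"
    then show "onorm (blinfun_apply (f' y) - blinfun_apply (f' x0)) \<le> \<eta>"
      using cont[of y] by (simp add: norm_blinfun.rep_eq minus_blinfun.rep_eq fun_diff_def)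
  qed (rule x0)
  moreover have "(x + h *\<^sub>R e) - (x - h *\<^sub>R e) = (2 * h) *\<^sub>R e" by (rule two_h)
  ultimately have *: "norm (f (x + h *\<^sub>R e) - f (x - h *\<^sub>R e) - (2 * h) *\<^sub>R f' x0 e) \<le> 2 * h * \<eta>"
    using h e by (simp add: blinfun.scaleR_right)
  have "(1 / (2 * h)) *\<^sub>R (f (x + h *\<^sub>R e) - f (x - h *\<^sub>R e)) - f' x0 e
      = (1 / (2 * h)) *\<^sub>R (f (x + h *\<^sub>R e) - f (x - h *\<^sub>R e) - (2 * h) *\<^sub>R f' x0 e)"
    using h by (simp add: algebra_simps)
  then have "norm ((1 / (2 * h)) *\<^sub>R (f (x + h *\<^sub>R e) - f (x - h *\<^sub>R e)) - f' x0 e)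
      = (1 / (2 * h)) * norm (f (x + h *\<^sub>R e) - f (x - h *\<^sub>R e) - (2 * h) *\<^sub>R f' x0 e)"
    using h by simp
  also have "\<dots> \<le> (1 / (2 * h)) * (2 * h * \<eta>)" using * h by (intro mult_left_mono) auto
  also have "\<dots> = \<eta>" using h by simp
  finally show ?thesis .
qed



lemma P_zero: "(\<forall>j. k j = 0) \<Longrightarrow> P b h k = b"
  by (simp add: P_def vec_eq_iff)

lemma flood:
  assumes bB: "b \<in> Bh" and bl: "b \<in> lattice h"
    and nd: "\<forall>k\<in>cube N. P b h k \<notin> dbound h Bh"
  shows "\<forall>k\<in>cube N. P b h k \<in> Bh"
proof -
  have "\<forall>k. (\<Sum>j\<in>UNIV. nat \<bar>k j\<bar>) = m \<longrightarrow> k \<in> cube N \<longrightarrow> P b h k \<in> Bh" for m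
  proof (induction m rule: less_induct)
    case (less m)
    show ?case
    proof (intro allI impI)
      fix k :: "8 \<Rightarrow> int" assume km: "(\<Sum>j\<in>UNIV. nat \<bar>k j\<bar>) = m" and kc: "k \<in> cube N"
      show "P b h k \<in> Bh"
      proof (cases "\<forall>j. k j = 0")
        case True then show ?thesis using P_zero bB by metis
      next
        case False
        then obtain i where ki: "k i \<noteq> 0" by blast
        define s where "s = sgn (k i)"
        define k' where "k' = k(i := k i - s)"
        have kk: "k = k'(i := k' i + s)" by (simp add: k'_def)
        have s: "s = 1 \<or> s = -1" using ki by (simp add: s_def sgn_if)
        have ki': "\<bar>k i - s\<bar> < \<bar>k i\<bar>" using ki by (auto simp: s_def sgn_if)
        have kc': "k' \<in> cube N"
        proof -
          have "\<bar>k j\<bar> \<le> int N" for j using kc by (auto simp: cube_def PiE_iff abs_le_iff) (meson minus_le_iff)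
          then have "\<bar>k' j\<bar> \<le> int N" for j using ki' by (auto simp: k'_def) (smt (verit))
          then show ?thesis by (auto simp: cube_def PiE_iff abs_le_iff) (meson minus_le_iff)
        qed
        have "(\<Sum>j\<in>UNIV. nat \<bar>k' j\<bar>) < (\<Sum>j\<in>UNIV. nat \<bar>k j\<bar>)"
        proof (rule sum_strict_mono_ex1)
          show "\<forall>j\<in>UNIV. nat \<bar>k' j\<bar> \<le> nat \<bar>k j\<bar>" using ki' by (auto simp: k'_def)
          show "\<exists>j\<in>UNIV. nat \<bar>k' j\<bar> < nat \<bar>k j\<bar>" using ki' by (auto simp: k'_def intro!: exI[of _ i])
        qed simp
        then have IH: "P b h k' \<in> Bh" using less.IH km kc' by blast
        obtain l where l: "l < 8" "i = of_nat l" using ex8 by blast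
        have Pk: "P b h k = P b h k' + (h * of_int s) *\<^sub>R axis i 1" using kk P_shift by metis
        have nb: "P b h k \<in> nbhd h (P b h k')"
          using s l(1) unfolding nbhd_def Pk
          by (auto simp: l(2) oe_def intro!: bexI[of _ l])
        have "P b h k' \<in> nbhd h (P b h k')" by (simp add: nbhd_def)
        moreover have "P b h k' \<in> lattice h" "P b h k \<in> lattice h" using P_lattice bl by auto
        moreover have "P b h k' \<notin> dbound h Bh" using nd kc' by blast
        ultimately show ?thesis using IH nb unfolding dbound_def by blast
      qed
    qed
  qed
  then show ?thesis by blast
qed



lemma cube_bound: "k \<in> cube n \<longleftrightarrow> (\<forall>j. \<bar>k j\<bar> \<le> int n)"
  by (auto simp: cube_def PiE_iff abs_le_iff) (meson minus_le_iff)+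

lemma cube_upd: "k \<in> cube n \<Longrightarrow> \<bar>s\<bar> \<le> 1 \<Longrightarrow> k(i := k i + s) \<in> cube (Suc n)"
proof -
  assume "k \<in> cube n" "\<bar>s\<bar> \<le> 1"
  then have kb: "\<And>j. \<bar>k j\<bar> \<le> int n" by (simp add: cube_bound)
  have "\<bar>(k(i := k i + s)) j\<bar> \<le> int (Suc n)" for j using \<open>\<bar>s\<bar> \<le> 1\<close> kb[of i] kb[of j]
    by (cases "j = i") (auto simp: abs_le_iff)
  then show ?thesis by (simp add: cube_bound)
qed

lemma cube_mono: "k \<in> cube n \<Longrightarrow> k \<in> cube (Suc n)"
  using cube_upd[of k n 0] by simp

theorem mainTheorem19:
  fixes B :: "(real^8) set"
    and Bh :: "real \<Rightarrow> (real^8) set"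
    and f :: "real^8 \<Rightarrow> real^8"
    and fh :: "real \<Rightarrow> real^8 \<Rightarrow> real^8"
    and f' :: "real^8 \<Rightarrow> ((real^8) \<Rightarrow>\<^sub>L (real^8))"
  assumes "open B" and "connected B" and "bounded B" and "B \<noteq> {}"
    and "\<forall>h>0. Bh h \<subseteq> lattice h"
    and "disc_converges Bh B"
    and "\<forall>x\<in>B. (f has_derivative blinfun_apply (f' x)) (at x)"
    and "continuous_on B f'"
    and "\<forall>h>0. \<forall>x\<in>dinterior h (Bh h). octDh h (fh h) x = 0"
    and "\<forall>\<epsilon>>0. \<forall>\<^sub>F h in at_right 0. \<forall>x\<in>Bh h \<inter> B. norm (f x - fh h x) < \<epsilon>"
  shows "\<forall>x\<in>B. octD f x = 0"
proof
  fix x0 assume x0B: "x0 \<in> B"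
  show "octD f x0 = 0"
  proof (rule ccontr)
    assume vne: "octD f x0 \<noteq> 0"
    define v where "v = octD f x0"
    have nv: "norm v > 0" using vne v_def by simp
    obtain K where K: "K > 0" "\<And>l y. l < 8 \<Longrightarrow> norm (omult (oe l) y) \<le> K * norm y"
      using omult_bound by blast
    define \<eta> where "\<eta> = norm v / (32 * K)"
    have \<eta>: "\<eta> > 0" using nv K by (simp add: \<eta>_def)
    obtain r where r: "r > 0" "ball x0 r \<subseteq> B" using assms(1) x0B open_contains_ball by blast
    obtain d where d: "d > 0" "\<And>y. y \<in> B \<Longrightarrow> dist y x0 < d \<Longrightarrow> dist (f' y) (f' x0) < \<eta>"
      using assms(8) x0B \<eta> unfolding continuous_on_iff by metis
    define \<rho> where "\<rho> = min (r/2) d"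
    have \<rho>: "\<rho> > 0" using r d by (simp add: \<rho>_def)
    have ball2: "ball x0 (2*\<rho>) \<subseteq> B" using r by (auto simp: \<rho>_def)
    have fcont: "norm (f' y - f' x0) \<le> \<eta>" if "y \<in> ball x0 \<rho>" for y
    proof -
      have "y \<in> B" using that ball2 \<rho> by auto
      moreover have "dist y x0 < d" using that by (auto simp: \<rho>_def dist_commute)
      ultimately show ?thesis using d(2)[of y] by (simp add: dist_norm)
    qed
    have fder: "(f has_derivative blinfun_apply (f' y)) (at y)" if "y \<in> ball x0 \<rho>" for y
    proof -
      have "y \<in> ball x0 (2*\<rho>)" using that \<rho> by auto
      then have "y \<in> B" using ball2 by blast
      then show ?thesis using assms(7) by blast
    qed
    define \<epsilon> where "\<epsilon> = norm v * \<rho> / (1024 * K)"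
    have \<epsilon>: "\<epsilon> > 0" using nv \<rho> K by (simp add: \<epsilon>_def)
    have ev1: "\<forall>\<^sub>F h in at_right 0. 0 < h \<and> h < \<rho>/64"
      unfolding eventually_at_right_field using \<rho> by (intro exI[of _ "\<rho>/64"]) auto
    have ev2: "\<forall>\<^sub>F h in at_right 0. \<forall>x\<in>Bh h \<inter> B. norm (f x - fh h x) < \<epsilon>"
      using assms(10) \<epsilon> by blast
    have ev3: "\<forall>\<^sub>F h in at_right 0. \<forall>a\<in>closure B. \<exists>b\<in>Bh h. dist a b < \<rho>/8"
    proof -
      have "\<rho>/8 > 0" using \<rho> by simp
      moreover have "\<forall>e>0. \<forall>\<^sub>F h in at_right 0. \<forall>a\<in>closure B. \<exists>b\<in>Bh h. dist a b < e"
        using assms(6) unfolding disc_converges_def maxmin_to0_def by blast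
      ultimately show ?thesis by blast
    qed
    have ev4: "\<forall>\<^sub>F h in at_right 0. \<forall>a\<in>dbound h (Bh h). \<exists>b\<in>frontier B. dist a b < \<rho>/8"
    proof -
      have "\<rho>/8 > 0" using \<rho> by simp
      moreover have "\<forall>e>0. \<forall>\<^sub>F h in at_right 0. \<forall>a\<in>dbound h (Bh h). \<exists>b\<in>frontier B. dist a b < e"
        using assms(6) unfolding disc_converges_def maxmin_to0_def by blast
      ultimately show ?thesis by blast
    qed
    have evall: "\<forall>\<^sub>F h in at_right 0. (0 < h \<and> h < \<rho>/64) \<and> (\<forall>x\<in>Bh h \<inter> B. norm (f x - fh h x) < \<epsilon>)
        \<and> (\<forall>a\<in>closure B. \<exists>b\<in>Bh h. dist a b < \<rho>/8) \<and> (\<forall>a\<in>dbound h (Bh h). \<exists>b\<in>frontier B. dist a b < \<rho>/8)"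
      by (intro eventually_conj ev1 ev2 ev3 ev4)
    obtain bb :: real where bb: "bb > 0" "\<forall>y>0. y < bb \<longrightarrow> ((0 < y \<and> y < \<rho>/64) \<and> (\<forall>x\<in>Bh y \<inter> B. norm (f x - fh y x) < \<epsilon>)
        \<and> (\<forall>a\<in>closure B. \<exists>b\<in>Bh y. dist a b < \<rho>/8) \<and> (\<forall>a\<in>dbound y (Bh y). \<exists>b\<in>frontier B. dist a b < \<rho>/8))"
      using evall unfolding eventually_at_right_field by blast
    define h where "h = bb / 2"
    have "0 < h" "h < bb" using bb(1) by (auto simp: h_def)
    then have hall: "(0 < h \<and> h < \<rho>/64) \<and> (\<forall>x\<in>Bh h \<inter> B. norm (f x - fh h x) < \<epsilon>)
        \<and> (\<forall>a\<in>closure B. \<exists>b\<in>Bh h. dist a b < \<rho>/8) \<and> (\<forall>a\<in>dbound h (Bh h). \<exists>b\<in>frontier B. dist a b < \<rho>/8)"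
      using bb(2) by blast
    then have h0: "0 < h" "h < \<rho>/64"
      and hf: "\<forall>x\<in>Bh h \<inter> B. norm (f x - fh h x) < \<epsilon>"
      and hc: "\<forall>a\<in>closure B. \<exists>b\<in>Bh h. dist a b < \<rho>/8"
      and hd: "\<forall>a\<in>dbound h (Bh h). \<exists>b\<in>frontier B. dist a b < \<rho>/8"
      by blast+
    obtain b where b: "b \<in> Bh h" "dist x0 b < \<rho>/8" using hc x0B closure_subset by blast
    have bl: "b \<in> lattice h" using assms(5) h0 b by blast
    define n where "n = nat \<lfloor>\<rho> / (32*h)\<rfloor>"
    have n1: "real n \<le> \<rho> / (32*h)" using \<rho> h0 by (simp add: n_def)
    have n2: "\<rho> / (32*h) - 1 \<le> real n" using \<rho> h0 by (simp add: n_def)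
    have A1: "h * (8 * real (Suc n)) \<le> 3*\<rho>/8"
    proof -
      have "h * real n \<le> \<rho> / 32" using n1 h0 by (simp add: field_simps)
      moreover have "h * (8 * real (Suc n)) = 8*h + 8*(h*real n)" by (simp add: algebra_simps)
      ultimately show ?thesis using h0 by linarith
    qed
    have A2: "\<rho> / 32 \<le> (2 * real n + 1) * h"
    proof -
      have "\<rho> / 32 - h \<le> h * real n" using n2 h0 by (simp add: field_simps)
      moreover have "(2 * real n + 1) * h = 2 * (h * real n) + h" by (simp add: algebra_simps)
      ultimately show ?thesis using h0 by linarith
    qed
    have near: "dist x0 (P b h k) < \<rho>/2" if "k \<in> cube (Suc n)" for k
    proof -
      have "dist x0 (P b h k) \<le> dist x0 b + norm (P b h k - b)"
        by (metis dist_norm dist_triangle dist_commute)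
      also have "norm (P b h k - b) \<le> h * (8 * real (Suc n))" using P_norm_cube[OF that, of b h] h0 by simp
      finally show ?thesis using A1 b(2) by simp
    qed
    have inB: "P b h k \<in> B" if "k \<in> cube (Suc n)" for k
      using near[OF that] ball2 \<rho> by (auto simp: dist_commute)
    have notdb: "P b h k \<notin> dbound h (Bh h)" if "k \<in> cube (Suc n)" for k
    proof
      assume "P b h k \<in> dbound h (Bh h)"
      then obtain z where z: "z \<in> frontier B" "dist (P b h k) z < \<rho>/8" using hd by blast
      have "dist x0 z < 2*\<rho>" using near[OF that] z(2) \<rho> dist_triangle[of x0 z "P b h k"] by simp
      then have "z \<in> B" using ball2 by auto
      moreover have "z \<notin> B" using z(1) assms(1) by (simp add: frontier_def interior_open)
      ultimately show False by blast
    qed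
    have inBh: "\<forall>k\<in>cube (Suc n). P b h k \<in> Bh h"
      by (rule flood[OF b(1) bl]) (use notdb in blast)
    have cube_sub: "cube n \<subseteq> cube (Suc n)" using cube_mono by blast
    have zeroDh: "octDh h (fh h) (P b h k) = 0" if "k \<in> cube n" for k
      using assms(9) h0 inBh notdb that cube_sub unfolding dinterior_def by blast
    define g where "g = (\<lambda>y. f y - fh h y)"
    have gb: "norm (g (P b h k)) \<le> \<epsilon>" if "k \<in> cube (Suc n)" for k
      using hf inBh inB that unfolding g_def by (meson IntI less_imp_le)
    define N where "N = 2 * n + 1"
    define S where "S = (\<Sum>k\<in>cube n. octDh h f (P b h k))"
    have S1: "S = (\<Sum>k\<in>cube n. octDh h g (P b h k))"
      unfolding S_def g_def octDh_diff using zeroDh by (intro sum.cong) auto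
    have S2: "norm S \<le> 8 * (K * ((1 / (2 * h)) * (4 * real N ^ 7 * \<epsilon>)))"
    proof -
      have "S = (\<Sum>l<8. omult (oe l) ((1 / (2 * h)) *\<^sub>R
          ((\<Sum>k\<in>cube n. g (P b h k + h *\<^sub>R oe l)) - (\<Sum>k\<in>cube n. g (P b h k - h *\<^sub>R oe l)))))"
        unfolding S1 by (rule octDh_sum) simp
      also have "norm \<dots> \<le> (\<Sum>l<(8::nat). K * ((1 / (2 * h)) * (4 * real N ^ 7 * \<epsilon>)))"
      proof (rule sum_norm_le)
        fix l :: nat assume "l \<in> {..<8}"
        then have l8: "l < 8" by simp
        have T: "norm ((\<Sum>k\<in>cube n. g (P b h k + h *\<^sub>R oe l)) - (\<Sum>k\<in>cube n. g (P b h k - h *\<^sub>R oe l)))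
            \<le> 4 * real N ^ 7 * \<epsilon>"
          using telescope[of n "\<lambda>k. g (P b h k)" \<epsilon> "of_nat l"] gb
          unfolding P_plus P_minus by (simp add: N_def add.commute)
        have "norm (omult (oe l) ((1 / (2 * h)) *\<^sub>R
          ((\<Sum>k\<in>cube n. g (P b h k + h *\<^sub>R oe l)) - (\<Sum>k\<in>cube n. g (P b h k - h *\<^sub>R oe l)))))
          \<le> K * norm ((1 / (2 * h)) *\<^sub>R
          ((\<Sum>k\<in>cube n. g (P b h k + h *\<^sub>R oe l)) - (\<Sum>k\<in>cube n. g (P b h k - h *\<^sub>R oe l))))"
          using K(2)[OF l8] by blast
        also have "\<dots> \<le> K * ((1 / (2 * h)) * (4 * real N ^ 7 * \<epsilon>))"
        proof (rule mult_left_mono)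
          let ?D = "(\<Sum>k\<in>cube n. g (P b h k + h *\<^sub>R oe l)) - (\<Sum>k\<in>cube n. g (P b h k - h *\<^sub>R oe l))"
          have "norm ((1 / (2 * h)) *\<^sub>R ?D) = (1 / (2 * h)) * norm ?D" using h0 by simp
          also have "\<dots> \<le> (1 / (2 * h)) * (4 * real N ^ 7 * \<epsilon>)"
            by (rule mult_left_mono[OF T]) (use h0 in simp)
          finally show "norm ((1 / (2 * h)) *\<^sub>R ?D) \<le> (1 / (2 * h)) * (4 * real N ^ 7 * \<epsilon>)" .
        qed (use K(1) in simp)
        finally show "norm (omult (oe l) ((1 / (2 * h)) *\<^sub>R
          ((\<Sum>k\<in>cube n. g (P b h k + h *\<^sub>R oe l)) - (\<Sum>k\<in>cube n. g (P b h k - h *\<^sub>R oe l)))))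
          \<le> K * ((1 / (2 * h)) * (4 * real N ^ 7 * \<epsilon>))" .
      qed
      also have "\<dots> = 8 * (K * ((1 / (2 * h)) * (4 * real N ^ 7 * \<epsilon>)))" by simp
      finally show ?thesis .
    qed
    have vform: "v = (\<Sum>l<8. omult (oe l) (f' x0 (oe l)))"
      unfolding v_def octD_def using frechet_derivative_at[OF assms(7)[rule_format, OF x0B]] by simp
    have pt: "norm (octDh h f (P b h k) - v) \<le> 8 * (K * \<eta>)" if k: "k \<in> cube n" for k
    proof -
      have "octDh h f (P b h k) - v = (\<Sum>l<8. omult (oe l)
          ((1 / (2 * h)) *\<^sub>R (f (P b h k + h *\<^sub>R oe l) - f (P b h k - h *\<^sub>R oe l)) - f' x0 (oe l)))"
        unfolding vform octDh_def by (simp add: sum_subtractf linear_diff[OF linear_omult])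
      also have "norm \<dots> \<le> (\<Sum>l<(8::nat). K * \<eta>)"
      proof (rule sum_norm_le)
        fix l :: nat assume "l \<in> {..<8}"
        then have l8: "l < 8" by simp
        have kp: "k(of_nat l := k (of_nat l) + 1) \<in> cube (Suc n)" "k(of_nat l := k (of_nat l) - 1) \<in> cube (Suc n)"
          using cube_upd[OF k, of 1] cube_upd[OF k, of "-1"] by auto
        have m: "norm ((1 / (2 * h)) *\<^sub>R (f (P b h k + h *\<^sub>R oe l) - f (P b h k - h *\<^sub>R oe l)) - f' x0 (oe l)) \<le> \<eta>"
        proof (rule mv_bound[where r=\<rho>])
          show "P b h k + h *\<^sub>R oe l \<in> ball x0 \<rho>" unfolding P_plus using near[OF kp(1)] \<rho> by simp
          show "P b h k - h *\<^sub>R oe l \<in> ball x0 \<rho>" unfolding P_minus using near[OF kp(2)] \<rho> by simp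
          show "norm (oe l) = 1" by (simp add: oe_def)
        qed (use fder fcont h0 in auto)
        show "norm (omult (oe l) ((1 / (2 * h)) *\<^sub>R (f (P b h k + h *\<^sub>R oe l) - f (P b h k - h *\<^sub>R oe l)) - f' x0 (oe l))) \<le> K * \<eta>"
          using K(2)[OF l8] m K(1) by (meson mult_left_mono less_imp_le order_trans)
      qed
      also have "\<dots> = 8 * (K * \<eta>)" by simp
      finally show ?thesis .
    qed
    have S3: "norm (S - real (N^8) *\<^sub>R v) \<le> real (N^8) * (8 * (K * \<eta>))"
    proof -
      have "S - real (N^8) *\<^sub>R v = (\<Sum>k\<in>cube n. octDh h f (P b h k) - v)"
      proof -
        have "(\<Sum>k\<in>cube n. v) = real (N^8) *\<^sub>R v"
          by (simp only: sum_constant_scaleR card_cube N_def)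
        then show ?thesis unfolding S_def by (simp only: sum_subtractf)
      qed
      also have "norm \<dots> \<le> (\<Sum>k\<in>cube n. 8 * (K * \<eta>))" by (rule sum_norm_le) (rule pt)
      also have "\<dots> = real (N^8) * (8 * (K * \<eta>))" by (simp add: card_cube N_def)
      finally show ?thesis .
    qed
    define X where "X = real N"
    have X: "X \<ge> 1" by (simp add: X_def N_def)
    have KE: "8 * (K * \<eta>) = norm v / 4" using K(1) by (simp add: \<eta>_def)
    have "X^8 * norm v \<le> norm S + X^8 * (norm v / 4)"
    proof -
      have "X^8 * norm v = norm (real (N^8) *\<^sub>R v)" by (simp add: X_def)
      also have "\<dots> \<le> norm S + norm (S - real (N^8) *\<^sub>R v)" by (metis norm_triangle_sub add.commute norm_minus_commute)
      finally show ?thesis using S3 KE by (simp add: X_def)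
    qed
    then have "X^8 * norm v \<le> 8 * (K * ((1 / (2 * h)) * (4 * X ^ 7 * \<epsilon>))) + X^8 * (norm v / 4)"
      using S2 by (simp add: X_def)
    then have c0: "h * (norm v * (3 * X ^ 8)) \<le> K * (\<epsilon> * (X ^ 7 * 64))"
      using h0 by (simp add: field_simps)
    have e1: "h * (norm v * (3 * X^8)) = X^7 * (3*(X*h*norm v))" by (simp add: eval_nat_numeral algebra_simps)
    have e2: "K * (\<epsilon> * (X ^ 7 * 64)) = X^7 * (64 * K * \<epsilon>)" by (simp add: algebra_simps)
    have "X^7 * (3*(X*h*norm v)) \<le> X^7 * (64 * K * \<epsilon>)" using c0 e1 e2 by simp
    moreover have "X^7 > 0" using X by simp
    ultimately have "3 * (X * h * norm v) \<le> 64 * K * \<epsilon>" by (simp add: mult_le_cancel_left_pos)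
    also have "64 * K * \<epsilon> = norm v * \<rho> / 16" using K(1) by (simp add: \<epsilon>_def)
    finally have c1: "3 * (X * h * norm v) \<le> norm v * \<rho> / 16" .
    have "\<rho> / 32 \<le> X * h" using A2 by (simp add: X_def N_def add.commute)
    then have "3 * (\<rho> / 32 * norm v) \<le> 3 * (X * h * norm v)" using nv by (simp add: mult_right_mono)
    with c1 have "3 * (\<rho> / 32 * norm v) \<le> norm v * \<rho> / 16" by linarith
    then show False using nv \<rho> by (simp add: field_simps)
  qed
qed


end
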